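(* Let $X\subset\mathbb R^n$, let $\alpha:[0,1]\to X$ be a parametrization of a line segment, and let $\beta:[0,1]\to X$ be any path with $\beta(0)=\alpha(0)$ and $\beta(1)=\alpha(1)$. Then $o(\alpha,(P,Q))\le o(\beta,(P,Q))$ for every pair $(P,Q)$ of distinct parallel hyperplanes. If in addition $\beta$ is not a reparametrization of $\alpha$, then there exists such a pair $(P,Q)$ with $o(\alpha,(P,Q))<o(\beta,(P,Q))$.
   Context: Let $g:\mathbb R^n\to[-1,1]$ depend only on $x_1$: $g=-1$ if $x_1\le-3$, $\frac12(x_1+1)$ if $-3\le x_1\le-1$, $0$ if $-1\le x_1\le1$, $\frac12(x_1-1)$ if $1\le x_1\le3$, $1$ if $x_1\ge3$. For distinct parallel hyperplanes $(P,Q)$, $g_{(P,Q)}=g\circ h_{(P,Q)}$ where $h_{(P,Q)}$ is a composition of a dilation, a rotation and a translation sending $P$ to $\{x_1=-3\}$ and $Q$ to $\{x_1=3\}$. For continuous $f:[a,b]\to\mathbb R^n$, the oscillation $o(f,(P,Q))$ is the supremum of $-\sum_{i=1}^k g_{(P,Q)}(f(a_{i-1}))g_{(P,Q)}(f(a_i))$ over finite collections $a\le a_0\le\dots\le a_k\le b$ (empty sums $=0$). *)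

theory Defs
  imports "HOL-Analysis.Analysis"
begin

definition g1 :: "real \<Rightarrow> real" where
  "g1 s = (if s \<le> -3 then -1
           else if s \<le> -1 then (s + 1) / 2
           else if s \<le> 1 then 0
           else if s \<le> 3 then (s - 1) / 2
           else 1)"

definition first_axis :: "'a::euclidean_space" where
  "first_axis = (SOME b. b \<in> Basis)"

definition g_fun :: "'a::euclidean_space \<Rightarrow> real" where
  "g_fun x = g1 (x \<bullet> first_axis)"

definition distinct_parallel_hyperplanes :: "'a::euclidean_space set \<Rightarrow> 'a set \<Rightarrow> bool" where
  "distinct_parallel_hyperplanes P Q \<longleftrightarrow>
     (\<exists>a c d. a \<noteq> 0 \<and> c \<noteq> d \<and> P = {x. a \<bullet> x = c} \<and> Q = {x. a \<bullet> x = d})"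

definition similarity_map :: "('a::euclidean_space \<Rightarrow> 'a) \<Rightarrow> bool" where
  "similarity_map h \<longleftrightarrow>
     (\<exists>r R t. r > 0 \<and> orthogonal_transformation R \<and> h = (\<lambda>x. t + r *\<^sub>R R x))"

definition h_PQ :: "'a::euclidean_space set \<Rightarrow> 'a set \<Rightarrow> 'a \<Rightarrow> 'a" where
  "h_PQ P Q = (SOME h. similarity_map h \<and>
                  h ` P = {y. y \<bullet> first_axis = -3} \<and> h ` Q = {y. y \<bullet> first_axis = 3})"

definition g_PQ :: "'a::euclidean_space set \<Rightarrow> 'a set \<Rightarrow> 'a \<Rightarrow> real" where
  "g_PQ P Q = g_fun \<circ> h_PQ P Q"

definition oscillation ::
  "(real \<Rightarrow> 'a::euclidean_space) \<Rightarrow> real \<Rightarrow> real \<Rightarrow> 'a set \<Rightarrow> 'a set \<Rightarrow> ereal" where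
  "oscillation f a b P Q =
     (SUP kt \<in> {(k::nat, t::nat \<Rightarrow> real). a \<le> t 0 \<and> (\<forall>i<k. t i \<le> t (Suc i)) \<and> t k \<le> b}.
        ereal (- (\<Sum>i\<in>{1..fst kt}. g_PQ P Q (f (snd kt (i - 1))) * g_PQ P Q (f (snd kt i)))))"

definition reparametrization_of :: "(real \<Rightarrow> 'a) \<Rightarrow> (real \<Rightarrow> 'a) \<Rightarrow> bool" where
  "reparametrization_of \<beta> \<alpha> \<longleftrightarrow>
     (\<exists>\<phi>. continuous_on {0..1} \<phi> \<and> mono_on {0..1} \<phi> \<and> \<phi> ` {0..1} \<subseteq> {0..1} \<and>
          \<phi> 0 = 0 \<and> \<phi> 1 = 1 \<and> (\<forall>t\<in>{0..1}. \<beta> t = \<alpha> (\<phi> t)))"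

end

theory Submission
  imports Defs
begin


lemma first_axis_basis: "(first_axis::'a::euclidean_space) \<in> Basis"
  unfolding first_axis_def by (rule someI_ex) (use nonempty_Basis in blast)

lemma first_axis_norm: "(first_axis::'a::euclidean_space) \<bullet> first_axis = 1"
  using first_axis_basis by (metis inner_Basis)

definition hh :: "'a::euclidean_space \<Rightarrow> 'a \<Rightarrow> 'a" where
  "hh v x = x - (2 * ((x \<bullet> v) / (v \<bullet> v))) *\<^sub>R v"

lemma hh_orth: "orthogonal_transformation (hh v)"
proof -
  have "linear (hh v)" unfolding hh_def
    by (rule linearI) (simp_all add: inner_add_left inner_scaleR_left add_divide_distrib algebra_simps scaleR_add_left)
  moreover have "hh v x \<bullet> hh v y = x \<bullet> y" for x y
  proof (cases "v = 0")
    case True then show ?thesis by (simp add: hh_def)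
  next
    case False
    then have "v \<bullet> v \<noteq> 0" by simp
    then show ?thesis unfolding hh_def
      by (simp add: inner_diff_left inner_diff_right algebra_simps power2_eq_square inner_commute) 
  qed
  ultimately show ?thesis unfolding orthogonal_transformation_def by blast
qed

lemma hh_maps:
  assumes "u \<bullet> u = 1" "e \<bullet> e = 1"
  shows "hh (u - e) u = e"
proof (cases "u = e")
  case True then show ?thesis by (simp add: hh_def)
next
  case False
  then have nz: "(u - e) \<bullet> (u - e) \<noteq> 0" by simp
  have "(u - e) \<bullet> (u - e) = 2 * (u \<bullet> (u - e))"
    using assms by (simp add: inner_diff_left inner_diff_right inner_commute)
  moreover then have "u \<bullet> (u - e) \<noteq> 0" using nz by (metis mult_zero_right)
  moreover have "\<And>X Y::real. Y = 2*X \<Longrightarrow> X \<noteq> 0 \<Longrightarrow> 2*(X/Y) = 1" by simp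
  ultimately have "2 * ((u \<bullet> (u - e)) / ((u - e) \<bullet> (u - e))) = 1" by blast
  then have "hh (u - e) u = u - 1 *\<^sub>R (u - e)" unfolding hh_def by (simp only:)
  then show ?thesis by simp
qed

lemma sim_exists:
  fixes a :: "'a::euclidean_space"
  assumes a: "a \<noteq> 0" and cd: "c \<noteq> d"
  shows "\<exists>h. similarity_map h \<and> h ` {x. a \<bullet> x = c} = {y. y \<bullet> first_axis = -3}
             \<and> h ` {x. a \<bullet> x = d} = {y. y \<bullet> first_axis = 3}"
proof -
  define e :: 'a where "e = first_axis"
  have ee: "e \<bullet> e = 1" unfolding e_def by (rule first_axis_norm)
  define \<sigma> where "\<sigma> = 6 / (d - c)"
  have \<sigma>0: "\<sigma> \<noteq> 0" using cd by (simp add: \<sigma>_def)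
  define u where "u = (sgn \<sigma> / norm a) *\<^sub>R a"
  have uu: "u \<bullet> u = 1" using a \<sigma>0 by (simp add: u_def sgn_if power2_norm_eq_inner[symmetric] power2_eq_square)
  define R where "R = hh (u - e)"
  have R: "orthogonal_transformation R" unfolding R_def by (rule hh_orth)
  have Ru: "R u = e" unfolding R_def using uu ee by (rule hh_maps)
  define r where "r = \<bar>\<sigma>\<bar> * norm a"
  have r0: "r > 0" using a \<sigma>0 by (simp add: r_def)
  define \<kappa> where "\<kappa> = -3 - \<sigma> * c"
  define h where "h = (\<lambda>x. \<kappa> *\<^sub>R e + r *\<^sub>R R x)"
  have sim: "similarity_map h" unfolding similarity_map_def h_def using r0 R by blast
  have hdot: "h x \<bullet> e = \<kappa> + \<sigma> * (a \<bullet> x)" for x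
  proof -
    have "R x \<bullet> e = x \<bullet> u" using R Ru unfolding orthogonal_transformation_def by metis
    also have "\<dots> = sgn \<sigma> / norm a * (a \<bullet> x)" by (simp add: u_def inner_commute)
    finally have "r * (R x \<bullet> e) = \<sigma> * (a \<bullet> x)" using a
      by (simp add: r_def) (metis abs_mult_sgn mult.commute)
    then show ?thesis by (simp add: h_def inner_add_left ee)
  qed
  have img: "h ` {x. a \<bullet> x = c'} = {y. y \<bullet> e = \<kappa> + \<sigma> * c'}" for c'
  proof
    show "h ` {x. a \<bullet> x = c'} \<subseteq> {y. y \<bullet> e = \<kappa> + \<sigma> * c'}" using hdot by auto
  next
    show "{y. y \<bullet> e = \<kappa> + \<sigma> * c'} \<subseteq> h ` {x. a \<bullet> x = c'}"
    proof
      fix y assume y: "y \<in> {y. y \<bullet> e = \<kappa> + \<sigma> * c'}"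
      define x where "x = inv R ((1 / r) *\<^sub>R (y - \<kappa> *\<^sub>R e))"
      have "R x = (1 / r) *\<^sub>R (y - \<kappa> *\<^sub>R e)" unfolding x_def
        using orthogonal_transformation_surj[OF R] by (simp add: surj_f_inv_f)
      then have hx: "h x = y" using r0 by (simp add: h_def)
      then have "\<kappa> + \<sigma> * (a \<bullet> x) = \<kappa> + \<sigma> * c'" using hdot[of x] y by simp
      then have "a \<bullet> x = c'" using \<sigma>0 by simp
      then show "y \<in> h ` {x. a \<bullet> x = c'}" using hx by blast
    qed
  qed
  have k3: "\<kappa> + \<sigma> * c = -3" by (simp add: \<kappa>_def)
  have dc: "d - c \<noteq> 0" using cd by simp
  have "\<sigma> * (d - c) = 6" unfolding \<sigma>_def using dc by (metis nonzero_divide_eq_eq)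
  moreover have "\<sigma> * d - \<sigma> * c = \<sigma> * (d - c)" by (simp add: algebra_simps)
  ultimately have "\<sigma> * d - \<sigma> * c = 6" by simp
  then have "\<kappa> + \<sigma> * d = 3" by (simp add: \<kappa>_def)
  with k3 show ?thesis using sim img[of c] img[of d] unfolding e_def by metis
qed

lemma sim_formula:
  fixes a :: "'a::euclidean_space"
  assumes a: "a \<noteq> 0" and cd: "c \<noteq> d" and sim: "similarity_map h"
    and hP: "h ` {x. a \<bullet> x = c} = {y. y \<bullet> first_axis = -3}"
    and hQ: "h ` {x. a \<bullet> x = d} = {y. y \<bullet> first_axis = 3}"
  shows "h x \<bullet> first_axis = -3 + 6 * (a \<bullet> x - c) / (d - c)"
proof -
  obtain r R t where R: "orthogonal_transformation R" and h: "h = (\<lambda>x. t + r *\<^sub>R R x)"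
    using sim unfolding similarity_map_def by blast
  have lin: "linear R" using R by (simp add: orthogonal_transformation_def)
  define e :: 'a where "e = first_axis"
  define W where "W = r * (R a \<bullet> e)"
  have aff: "h (y + s *\<^sub>R a) \<bullet> e = h y \<bullet> e + s * W" for y s
    by (simp add: h W_def linear_add[OF lin] linear_scale[OF lin] inner_add_left algebra_simps)
  have aa: "a \<bullet> a \<noteq> 0" using a by simp
  define s where "s = (a \<bullet> x - c) / (a \<bullet> a)"
  define p where "p = x - s *\<^sub>R a"
  have pP: "a \<bullet> p = c" using aa by (simp add: p_def s_def inner_diff_right)
  have hp: "h p \<bullet> e = -3" using hP pP unfolding e_def by blast
  define q where "q = p + ((d - c) / (a \<bullet> a)) *\<^sub>R a"
  have qQ: "a \<bullet> q = d" using aa pP by (simp add: q_def inner_add_right)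
  have hq: "h q \<bullet> e = 3" using hQ qQ unfolding e_def by blast
  have "3 = -3 + ((d - c) / (a \<bullet> a)) * W" using aff[of p] hp hq by (simp add: q_def)
  then have W: "W = 6 * (a \<bullet> a) / (d - c)" using aa cd by (simp add: field_simps)
  have "x = p + s *\<^sub>R a" by (simp add: p_def)
  then have "h x \<bullet> e = -3 + s * W" using aff[of p s] hp by simp
  also have "\<dots> = -3 + 6 * (a \<bullet> x - c) / (d - c)" using aa cd by (simp add: W s_def field_simps)
  finally show ?thesis unfolding e_def .
qed

lemma gPQ_formula:
  fixes a :: "'a::euclidean_space"
  assumes a: "a \<noteq> 0" and cd: "c \<noteq> d"
  shows "g_PQ {x. a \<bullet> x = c} {x. a \<bullet> x = d} x = g1 (-3 + 6 * (a \<bullet> x - c) / (d - c))"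
proof -
  let ?P = "{x. a \<bullet> x = c}" and ?Q = "{x. a \<bullet> x = d}"
  define \<Phi> where "\<Phi> = (\<lambda>h::'a\<Rightarrow>'a. similarity_map h \<and> h ` ?P = {y. y \<bullet> first_axis = -3}
        \<and> h ` ?Q = {y. y \<bullet> first_axis = 3})"
  have "\<exists>h. \<Phi> h" unfolding \<Phi>_def by (rule sim_exists[OF a cd])
  then have "\<Phi> (SOME h. \<Phi> h)" by (rule someI_ex)
  then have "similarity_map (h_PQ ?P ?Q) \<and> h_PQ ?P ?Q ` ?P = {y. y \<bullet> first_axis = -3}
        \<and> h_PQ ?P ?Q ` ?Q = {y. y \<bullet> first_axis = 3}"
    unfolding h_PQ_def \<Phi>_def by simp
  then show ?thesis unfolding g_PQ_def g_fun_def using sim_formula[OF a cd] by simp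
qed



lemma g1_mono: "s \<le> t \<Longrightarrow> g1 s \<le> g1 t"
  unfolding g1_def by (auto simp: field_simps)

lemma g1_low: "s \<le> -3 \<Longrightarrow> g1 s = -1" unfolding g1_def by auto
lemma g1_high: "s \<ge> 3 \<Longrightarrow> g1 s = 1" unfolding g1_def by auto

lemma chain_le:
  fixes t :: "nat \<Rightarrow> real"
  assumes "\<forall>i<k. t i \<le> t (Suc i)" "i \<le> j" "j \<le> k"
  shows "t i \<le> t j"
  using assms(2,3)
proof (induction j)
  case 0 then show ?case by simp
next
  case (Suc j)
  show ?case
  proof (cases "i = Suc j")
    case True then show ?thesis by simp
  next
    case False
    then have "i \<le> j" "j < k" using Suc.prems by auto
    then have "t i \<le> t j" using Suc.IH by simp
    also have "t j \<le> t (Suc j)" using assms(1) \<open>j < k\<close> by simp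
    finally show ?thesis .
  qed
qed

lemma seq_bound:
  fixes v :: "nat \<Rightarrow> real"
  assumes "\<forall>i<k. v i \<le> v (Suc i)"
  shows "-(\<Sum>i\<in>{1..k}. v (i - 1) * v i) \<le> max 0 (-(v 0 * v k))"
  using assms
proof (induction k)
  case 0 then show ?case by simp
next
  case (Suc k)
  then have IH: "-(\<Sum>i\<in>{1..k}. v (i - 1) * v i) \<le> max 0 (-(v 0 * v k))" by simp
  have mono: "v 0 \<le> v k" using chain_le[of "Suc k" v 0 k] Suc.prems by simp
  have step: "v k \<le> v (Suc k)" using Suc.prems by simp
  have eq: "(\<Sum>i\<in>{1..Suc k}. v (i - 1) * v i) = (\<Sum>i\<in>{1..k}. v (i - 1) * v i) + v k * v (Suc k)"
    by simp
  show ?case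
  proof (cases "v k \<ge> 0")
    case True
    then have "- (v k * v (Suc k)) \<le> 0" using step by simp
    moreover have "max 0 (-(v 0 * v k)) \<le> max 0 (-(v 0 * v (Suc k)))"
    proof (cases "v 0 < 0")
      case True
      then have "-(v 0 * v k) \<le> -(v 0 * v (Suc k))" using step by (simp add: mult_left_mono_neg)
      then show ?thesis by simp
    next
      case False
      then have "v 0 * v k \<ge> 0" using \<open>v k \<ge> 0\<close> by simp
      then show ?thesis by simp
    qed
    ultimately show ?thesis using IH eq by linarith
  next
    case False
    then have "v 0 < 0" using mono by simp
    then have "-(v 0 * v k) \<le> 0" using False by (simp add: mult_nonpos_nonpos)
    moreover have "-(v k * v (Suc k)) \<le> max 0 (-(v 0 * v (Suc k)))"
    proof (cases "v (Suc k) \<le> 0")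
      case True
      have "0 \<le> v k * v (Suc k)" using True False by (intro mult_nonpos_nonpos) auto
      then show ?thesis by simp
    next
      case F2: False
      then have "-(v k * v (Suc k)) \<le> -(v 0 * v (Suc k))" using mono by (simp add: mult_right_mono)
      then show ?thesis by simp
    qed
    ultimately show ?thesis using IH eq by linarith
  qed
qed

lemma core_bound:
  fixes w :: "real \<Rightarrow> real" and t :: "nat \<Rightarrow> real"
  assumes mono: "\<And>s u. 0 \<le> s \<Longrightarrow> s \<le> u \<Longrightarrow> u \<le> 1 \<Longrightarrow> w s \<le> w u"
    and t0: "0 \<le> t 0" and tm: "\<forall>i<k. t i \<le> t (Suc i)" and tk: "t k \<le> 1"
  shows "-(\<Sum>i\<in>{1..k}. w (t (i - 1)) * w (t i)) \<le> max 0 (-(w 0 * w 1))"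
proof -
  have tin: "0 \<le> t i \<and> t i \<le> 1" if "i \<le> k" for i
    using chain_le[OF tm, of 0 i] chain_le[OF tm, of i k] that t0 tk by auto
  define v where "v i = w (t i)" for i
  have vm: "\<forall>i<k. v i \<le> v (Suc i)"
    using tin tm mono unfolding v_def by (metis Suc_leI less_imp_le)
  have "-(\<Sum>i\<in>{1..k}. v (i - 1) * v i) \<le> max 0 (-(v 0 * v k))" by (rule seq_bound[OF vm])
  moreover have "max 0 (-(v 0 * v k)) \<le> max 0 (-(w 0 * w 1))"
  proof -
    have a1: "w 0 \<le> v 0" unfolding v_def using tin[of 0] mono by simp
    have a2: "v 0 \<le> v k" unfolding v_def using tin[of 0] tin[of k] chain_le[OF tm, of 0 k] mono by simp
    have a3: "v k \<le> w 1" unfolding v_def using tin[of k] mono by simp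
    show ?thesis
    proof (cases "v 0 < 0 \<and> v k > 0")
      case True
      then have "(- v 0) * v k \<le> (- w 0) * w 1" using a1 a3 by (intro mult_mono) auto
      then show ?thesis by simp
    next
      case False
      then have "v 0 * v k \<ge> 0" using a2 by (auto simp: zero_le_mult_iff)
      then show ?thesis by simp
    qed
  qed
  ultimately show ?thesis unfolding v_def by simp
qed

lemma osc_upper:
  fixes f :: "real \<Rightarrow> 'a::euclidean_space"
  assumes "\<And>s u. 0 \<le> s \<Longrightarrow> s \<le> u \<Longrightarrow> u \<le> 1 \<Longrightarrow> w s \<le> w u"
    and "(\<forall>s. g_PQ P Q (f s) = w s) \<or> (\<forall>s. g_PQ P Q (f s) = - w s)"
  shows "oscillation f 0 1 P Q \<le> ereal (max 0 (-(w 0 * w 1)))"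
  unfolding oscillation_def
proof (rule SUP_least)
  fix kt :: "nat \<times> (nat \<Rightarrow> real)"
  assume "kt \<in> {(k, t). 0 \<le> t 0 \<and> (\<forall>i<k. t i \<le> t (Suc i)) \<and> t k \<le> 1}"
  then obtain k t where kt: "kt = (k, t)" and t: "0 \<le> t 0" "\<forall>i<k. t i \<le> t (Suc i)" "t k \<le> 1"
    by auto
  have eqs: "(\<Sum>i\<in>{1..k}. g_PQ P Q (f (t (i - 1))) * g_PQ P Q (f (t i))) = (\<Sum>i\<in>{1..k}. w (t (i - 1)) * w (t i))"
    using assms(2) by auto
  show "ereal (- (\<Sum>i\<in>{1..fst kt}. g_PQ P Q (f (snd kt (i - 1))) * g_PQ P Q (f (snd kt i)))) \<le> ereal (max 0 (- (w 0 * w 1)))"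
  proof -
    have "-(\<Sum>i\<in>{1..k}. w (t (i - 1)) * w (t i)) \<le> max 0 (-(w 0 * w 1))"
      by (rule core_bound[of w t k]) (use assms(1) t in auto)
    then show ?thesis using eqs kt by (subst ereal_less_eq(3)) simp
  qed
qed

lemma osc_lower:
  assumes "0 \<le> t 0" "\<forall>i<k. t i \<le> t (Suc i)" "t k \<le> 1"
  shows "ereal (- (\<Sum>i\<in>{1..k}. g_PQ P Q (f (t (i - 1))) * g_PQ P Q (f (t i)))) \<le> oscillation f 0 1 P Q"
  unfolding oscillation_def
  by (rule SUP_upper2[of "(k, t)"]) (use assms in auto)

lemma osc_lower0: "0 \<le> oscillation f 0 1 P Q"
  using osc_lower[of "\<lambda>_. 0" 0] by (simp add: zero_ereal_def)

lemma osc_lower1: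
  assumes "0 \<le> s" "s \<le> u" "u \<le> 1"
  shows "ereal (- (g_PQ P Q (f s) * g_PQ P Q (f u))) \<le> oscillation f 0 1 P Q"
  using osc_lower[of "\<lambda>i. if i = 0 then s else u" 1 P Q f] assms by simp

lemma osc_lower3:
  assumes "0 \<le> s1" "s1 \<le> s2" "s2 \<le> s3" "s3 \<le> s4" "s4 \<le> 1"
  shows "ereal (- (g_PQ P Q (f s1) * g_PQ P Q (f s2) + g_PQ P Q (f s2) * g_PQ P Q (f s3)
           + g_PQ P Q (f s3) * g_PQ P Q (f s4))) \<le> oscillation f 0 1 P Q"
proof -
  define t where "t i = (if i = 0 then s1 else if i = 1 then s2 else if i = 2 then s3 else s4)" for i :: nat
  have "\<forall>i<3. t i \<le> t (Suc i)" using assms by (auto simp: t_def less_Suc_eq numeral_3_eq_3)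
  from osc_lower[of t 3 P Q f, OF _ this] assms
  show ?thesis by (simp add: t_def numeral_3_eq_3 add.assoc)
qed



lemma seg_param:
  fixes A B x :: "'a::euclidean_space"
  assumes "A \<noteq> B" "x \<in> closed_segment A B"
  defines "m \<equiv> ((x - A) \<bullet> (B - A)) / ((B - A) \<bullet> (B - A))"
  shows "x = A + m *\<^sub>R (B - A) \<and> 0 \<le> m \<and> m \<le> 1"
proof -
  obtain u where u: "0 \<le> u" "u \<le> 1" "x = (1 - u) *\<^sub>R A + u *\<^sub>R B"
    using assms(2) unfolding closed_segment_def by blast
  have x: "x = A + u *\<^sub>R (B - A)" using u(3) by (simp add: algebra_simps)
  have DD: "(B - A) \<bullet> (B - A) \<noteq> 0" using assms(1) by simp
  have "m = u" unfolding m_def using DD by (simp add: x)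
  then show ?thesis using x u by simp
qed

lemma aff_ratio:
  fixes p q c d m :: real
  assumes "d - c \<noteq> 0"
  shows "-3 + 6 * (p + m * q - c) / (d - c) = (-3 + 6 * (p - c) / (d - c)) + m * (6 * q / (d - c))"
proof -
  have "6 * (p + m * q - c) = 6 * (p - c) + m * (6 * q)" by (simp add: algebra_simps)
  then have "6 * (p + m * q - c) / (d - c) = 6 * (p - c) / (d - c) + m * (6 * q) / (d - c)"
    by (simp only: add_divide_distrib)
  then show ?thesis by simp
qed

theorem lemma3p4:
  fixes X :: "'a::euclidean_space set" and \<alpha> \<beta> :: "real \<Rightarrow> 'a"
  assumes "arc \<alpha>" and "path_image \<alpha> = closed_segment (\<alpha> 0) (\<alpha> 1)"
    and "path_image \<alpha> \<subseteq> X"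
    and "path \<beta>" and "path_image \<beta> \<subseteq> X"
    and "\<beta> 0 = \<alpha> 0" and "\<beta> 1 = \<alpha> 1"
  shows "(\<forall>P Q. distinct_parallel_hyperplanes P Q \<longrightarrow>
            oscillation \<alpha> 0 1 P Q \<le> oscillation \<beta> 0 1 P Q)
       \<and> (\<not> reparametrization_of \<beta> \<alpha> \<longrightarrow>
            (\<exists>P Q. distinct_parallel_hyperplanes P Q \<and>
                   oscillation \<alpha> 0 1 P Q < oscillation \<beta> 0 1 P Q))"
proof -
  note arc = assms(1) and seg = assms(2) and b0 = assms(6) and b1 = assms(7)
  have pa: "path \<alpha>" and inj: "inj_on \<alpha> {0..1}" using arc by (auto simp: arc_def)
  have ca: "continuous_on {0..1} \<alpha>" using pa by (simp add: path_def)
  have cb: "continuous_on {0..1} \<beta>" using assms(4) by (simp add: path_def)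
  define A where "A = \<alpha> 0"
  define B where "B = \<alpha> 1"
  define D where "D = B - A"
  have AB: "A \<noteq> B" unfolding A_def B_def using inj by (auto dest: inj_onD)
  have DD: "D \<bullet> D > 0" using AB by (simp add: D_def)
  define S where "S = closed_segment A B"
  have imgS: "\<alpha> ` {0..1} = S" using seg by (simp add: path_image_def S_def A_def B_def)
  define lam where "lam t = ((\<alpha> t - A) \<bullet> D) / (D \<bullet> D)" for t
  have apar: "\<alpha> t = A + lam t *\<^sub>R D \<and> 0 \<le> lam t \<and> lam t \<le> 1" if "t \<in> {0..1}" for t
    using seg_param[OF AB, of "\<alpha> t"] imgS that unfolding lam_def D_def S_def by blast
  have lam0: "lam 0 = 0" by (simp add: lam_def A_def)
  have lam1: "lam 1 = 1" using DD by (simp add: lam_def A_def B_def D_def)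
  have clam: "continuous_on {0..1} lam" unfolding lam_def using DD by (intro continuous_intros ca) auto
  have ilam: "inj_on lam {0..1}"
  proof (rule inj_onI)
    fix s t assume "s \<in> {0..1}" "t \<in> {0..1}" "lam s = lam t"
    then have "\<alpha> s = \<alpha> t" using apar by metis
    then show "s = t" using inj \<open>s \<in> _\<close> \<open>t \<in> _\<close> by (auto dest: inj_onD)
  qed
  have slam: "lam s < lam t" if "0 \<le> s" "s < t" "t \<le> 1" for s t
  proof (cases "s = 0")
    case True
    have "lam t \<noteq> lam 0" using ilam that by (auto dest: inj_onD)
    moreover have "lam t \<ge> 0" using apar that by auto
    ultimately show ?thesis using True lam0 by simp
  next
    case False
    have c: "continuous_on {0..t} lam" using clam by (rule continuous_on_subset) (use that in auto)
    have i: "inj_on lam {0..t}" using ilam by (rule inj_on_subset) (use that in auto)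
    have "lam s \<ge> 0" using apar that by auto
    then show ?thesis using continuous_inj_imp_mono[of 0 s t lam, OF _ _ c i] that False lam0 by auto
  qed
  have upper: "oscillation \<alpha> 0 1 P Q \<le> ereal (max 0 (-(g_PQ P Q (\<alpha> 0) * g_PQ P Q (\<alpha> 1))))"
    if "distinct_parallel_hyperplanes P Q" for P Q
  proof -
    have "\<exists>a c d. a \<noteq> 0 \<and> c \<noteq> d \<and> P = {x. a \<bullet> x = c} \<and> Q = {x. a \<bullet> x = d}"
      using that by (simp only: distinct_parallel_hyperplanes_def)
    then obtain a c d where a: "a \<noteq> 0" and cd: "c \<noteq> d" and P: "P = {x. a \<bullet> x = c}"
      and Q: "Q = {x. a \<bullet> x = d}" by (elim exE conjE)
    have dc: "d - c \<noteq> 0" using cd by simp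
    define G where "G = g_PQ P Q"
    have Gf: "G x = g1 (-3 + 6 * (a \<bullet> x - c) / (d - c))" for x
      unfolding G_def P Q by (rule gPQ_formula[OF a cd])
    define K where "K = 6 * (a \<bullet> D) / (d - c)"
    define L0 where "L0 = -3 + 6 * (a \<bullet> A - c) / (d - c)"
    have Ga: "G (\<alpha> t) = g1 (L0 + lam t * K)" if "t \<in> {0..1}" for t
    proof -
      have "\<alpha> t = A + lam t *\<^sub>R D" using apar that by blast
      then have "a \<bullet> \<alpha> t = a \<bullet> A + lam t * (a \<bullet> D)" by (simp add: inner_add_right)
      then show ?thesis by (simp only: Gf aff_ratio[OF dc] L0_def K_def)
    qed
    define w where "w s = (if K \<ge> 0 then G (\<alpha> s) else - G (\<alpha> s))" for s
    have wm: "w s \<le> w u" if "0 \<le> s" "s \<le> u" "u \<le> 1" for s u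
    proof -
      have ls: "lam s \<le> lam u" using slam[of s u] that by (cases "s = u") auto
      have si: "s \<in> {0..1}" "u \<in> {0..1}" using that by auto
      show ?thesis
      proof (cases "K \<ge> 0")
        case True
        then have "L0 + lam s * K \<le> L0 + lam u * K" using ls by (simp add: mult_right_mono)
        then show ?thesis using True Ga[OF si(1)] Ga[OF si(2)] g1_mono by (simp add: w_def)
      next
        case False
        then have "L0 + lam u * K \<le> L0 + lam s * K" using ls by (simp add: mult_right_mono_neg)
        then show ?thesis using False Ga[OF si(1)] Ga[OF si(2)] g1_mono by (simp add: w_def)
      qed
    qed
    have "(\<forall>s. g_PQ P Q (\<alpha> s) = w s) \<or> (\<forall>s. g_PQ P Q (\<alpha> s) = - w s)"
      by (cases "K \<ge> 0") (auto simp: w_def G_def)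
    have ww: "w 0 * w 1 = g_PQ P Q (\<alpha> 0) * g_PQ P Q (\<alpha> 1)" by (simp add: w_def G_def)
    have "oscillation \<alpha> 0 1 P Q \<le> ereal (max 0 (-(w 0 * w 1)))"
      by (rule osc_upper[of w]) (use wm \<open>_ \<or> _\<close> in auto)
    then show ?thesis by (simp only: ww)
  qed
  have part1: "oscillation \<alpha> 0 1 P Q \<le> oscillation \<beta> 0 1 P Q"
    if "distinct_parallel_hyperplanes P Q" for P Q
  proof -
    have "ereal (max 0 (-(g_PQ P Q (\<alpha> 0) * g_PQ P Q (\<alpha> 1)))) \<le> oscillation \<beta> 0 1 P Q"
      using osc_lower0[of \<beta> P Q] osc_lower1[of 0 1 P Q \<beta>] b0 b1
      by (simp add: max_def zero_ereal_def)
    then show ?thesis using upper[OF that] by (rule order_trans[rotated])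
  qed
  have part2: "\<exists>P Q. distinct_parallel_hyperplanes P Q \<and>
                   oscillation \<alpha> 0 1 P Q < oscillation \<beta> 0 1 P Q"
    if nr: "\<not> reparametrization_of \<beta> \<alpha>"
  proof (cases "\<exists>s\<in>{0..1}. \<beta> s \<notin> S")
    case True
    then obtain s where s: "s \<in> {0..1}" "\<beta> s \<notin> S" by blast
    obtain a b where ab: "a \<bullet> \<beta> s < b" "\<forall>x\<in>S. b < a \<bullet> x"
      using separating_hyperplane_closed_point[OF convex_closed_segment closed_segment, of "\<beta> s" A B]
        s(2) unfolding S_def by blast
    have AS: "A \<in> S" unfolding S_def by simp
    have a: "a \<noteq> 0" using ab AS by auto
    have cd: "b \<noteq> a \<bullet> \<beta> s" using ab by simp
    define P where "P = {x. a \<bullet> x = b}"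
    define Q where "Q = {x. a \<bullet> x = a \<bullet> \<beta> s}"
    have dph: "distinct_parallel_hyperplanes P Q"
      unfolding distinct_parallel_hyperplanes_def P_def Q_def using a cd by blast
    have Gf: "g_PQ P Q x = g1 (-3 + 6 * (a \<bullet> x - b) / (a \<bullet> \<beta> s - b))" for x
      unfolding P_def Q_def by (rule gPQ_formula[OF a cd])
    have GS: "g_PQ P Q x = -1" if "x \<in> S" for x
    proof -
      have "6 * (a \<bullet> x - b) / (a \<bullet> \<beta> s - b) < 0" using ab that by (intro divide_pos_neg) auto
      then show ?thesis unfolding Gf by (intro g1_low) linarith
    qed
    have Gs: "g_PQ P Q (\<beta> s) = 1"
    proof -
      have "\<And>z::real. z \<noteq> 0 \<Longrightarrow> 6 * z / z = 6" by simp
      have "a \<bullet> \<beta> s - b \<noteq> 0" using cd by simp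
      then have "6 * (a \<bullet> \<beta> s - b) / (a \<bullet> \<beta> s - b) = 6"
        using \<open>\<And>z::real. z \<noteq> 0 \<Longrightarrow> 6 * z / z = 6\<close> by blast
      then show ?thesis unfolding Gf by (intro g1_high) linarith
    qed
    have a0: "g_PQ P Q (\<alpha> 0) = -1" using GS AS by (simp add: A_def)
    have BS: "B \<in> S" unfolding S_def by simp
    have a1: "g_PQ P Q (\<alpha> 1) = -1" using GS BS by (simp add: B_def)
    have "oscillation \<alpha> 0 1 P Q \<le> ereal 0" using upper[OF dph] a0 a1 by simp
    also have "ereal 0 < ereal 1" by simp
    also have "ereal 1 \<le> oscillation \<beta> 0 1 P Q"
      using osc_lower1[of 0 s P Q \<beta>] s(1) b0 a0 Gs by simp
    finally show ?thesis using dph by blast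
  next
    case False
    then have bS: "\<beta> s \<in> S" if "s \<in> {0..1}" for s using that by blast
    define mu where "mu s = ((\<beta> s - A) \<bullet> D) / (D \<bullet> D)" for s
    have bpar: "\<beta> t = A + mu t *\<^sub>R D \<and> 0 \<le> mu t \<and> mu t \<le> 1" if "t \<in> {0..1}" for t
      using seg_param[OF AB, of "\<beta> t"] bS[OF that] unfolding mu_def D_def S_def by blast
    show ?thesis
    proof (cases "\<forall>s u. 0 \<le> s \<longrightarrow> s \<le> u \<longrightarrow> u \<le> 1 \<longrightarrow> mu s \<le> mu u")
      case True
      define \<phi> where "\<phi> s = inv_into {0..1} \<alpha> (\<beta> s)" for s
      have bin: "\<beta> s \<in> \<alpha> ` {0..1}" if "s \<in> {0..1}" for s using bS[OF that] imgS by simp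
      have ci: "continuous_on (\<alpha> ` {0..1}) (inv_into {0..1} \<alpha>)"
        by (rule continuous_on_inv[OF ca compact_Icc]) (simp add: inj)
      have cphi: "continuous_on {0..1} \<phi>" unfolding \<phi>_def
        by (rule continuous_on_compose2[OF ci cb]) (use bin in auto)
      have phin: "\<phi> s \<in> {0..1}" if "s \<in> {0..1}" for s
        unfolding \<phi>_def by (rule inv_into_into[OF bin[OF that]])
      have aphi: "\<alpha> (\<phi> s) = \<beta> s" if "s \<in> {0..1}" for s
        unfolding \<phi>_def by (rule f_inv_into_f[OF bin[OF that]])
      have lphi: "lam (\<phi> s) = mu s" if "s \<in> {0..1}" for s
        unfolding lam_def mu_def using aphi[OF that] by simp
      have mphi: "mono_on {0..1} \<phi>"
      proof (rule mono_onI)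
        fix r s :: real assume r: "r \<in> {0..1}" and s: "s \<in> {0..1}" and rs: "r \<le> s"
        show "\<phi> r \<le> \<phi> s"
        proof (rule ccontr)
          assume "\<not> \<phi> r \<le> \<phi> s"
          then have "lam (\<phi> s) < lam (\<phi> r)" using slam phin[OF r] phin[OF s] by auto
          then have "mu s < mu r" using lphi r s by simp
          moreover have "mu r \<le> mu s" using True r s rs by auto
          ultimately show False by simp
        qed
      qed
      have "\<phi> 0 = 0" unfolding \<phi>_def using b0 inj by simp
      moreover have "\<phi> 1 = 1" unfolding \<phi>_def using b1 inj by simp
      ultimately have "reparametrization_of \<beta> \<alpha>"
        unfolding reparametrization_of_def using cphi mphi phin aphi by (intro exI[of _ \<phi>]) auto
      with nr show ?thesis by blast
    next
      case False
      then obtain s u where su: "0 \<le> s" "s \<le> u" "u \<le> 1" "mu u < mu s" by auto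
      define y where "y = mu u"
      define x where "x = mu s"
      have xy: "y < x" using su by (simp add: x_def y_def)
      have y0: "0 \<le> y" and x1: "x \<le> 1" using bpar su by (auto simp: x_def y_def)
      have DD0: "D \<bullet> D \<noteq> 0" using DD by simp
      have D0: "D \<noteq> 0" using DD by auto
      define c where "c = D \<bullet> A + y * (D \<bullet> D)"
      define d where "d = D \<bullet> A + x * (D \<bullet> D)"
      have cd: "c \<noteq> d" using xy DD0 by (simp add: c_def d_def)
      define P where "P = {z. D \<bullet> z = c}"
      define Q where "Q = {z. D \<bullet> z = d}"
      have dph: "distinct_parallel_hyperplanes P Q"
        unfolding distinct_parallel_hyperplanes_def P_def Q_def using D0 cd by blast
      have Gl: "g_PQ P Q (A + m *\<^sub>R D) = g1 (-3 + 6 * (m - y) / (x - y))" for m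
      proof -
        have "D \<bullet> (A + m *\<^sub>R D) - c = (m - y) * (D \<bullet> D)"
          by (simp add: c_def inner_add_right algebra_simps)
        moreover have "d - c = (x - y) * (D \<bullet> D)" by (simp add: c_def d_def algebra_simps)
        ultimately have "6 * (D \<bullet> (A + m *\<^sub>R D) - c) / (d - c) = 6 * (m - y) / (x - y)"
          using DD0 by simp
        then show ?thesis unfolding P_def Q_def gPQ_formula[OF D0 cd] by simp
      qed
      have A0: "\<alpha> 0 = A + 0 *\<^sub>R D" by (simp add: A_def)
      have A1: "\<alpha> 1 = A + 1 *\<^sub>R D" by (simp add: A_def B_def D_def)
      have v0: "g_PQ P Q (\<alpha> 0) = -1"
      proof -
        have "6 * (0 - y) / (x - y) \<le> 0" using xy y0 by (simp add: divide_nonpos_pos)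
        then show ?thesis unfolding A0 Gl by (intro g1_low) simp
      qed
      have v1: "g_PQ P Q (\<alpha> 1) = 1"
      proof -
        have "1 \<le> (1 - y) / (x - y)" using xy x1 by simp
        then have "6 \<le> 6 * (1 - y) / (x - y)" by (simp only: times_divide_eq_right[symmetric])
        then show ?thesis unfolding A1 Gl by (intro g1_high) linarith
      qed
      have vs: "g_PQ P Q (\<beta> s) = 1"
      proof -
        have "\<beta> s = A + x *\<^sub>R D" using bpar su by (simp add: x_def)
        have "\<And>z::real. z \<noteq> 0 \<Longrightarrow> 6 * z / z = 6" by simp
        moreover have "x - y \<noteq> 0" using xy by simp
        ultimately have "6 * (x - y) / (x - y) = 6" by blast
        then show ?thesis unfolding \<open>\<beta> s = _\<close> Gl by (intro g1_high) linarith
      qed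
      have vu: "g_PQ P Q (\<beta> u) = -1"
      proof -
        have "\<beta> u = A + y *\<^sub>R D" using bpar su by (simp add: y_def)
        then show ?thesis unfolding \<open>\<beta> u = _\<close> Gl by (intro g1_low) simp
      qed
      have "oscillation \<alpha> 0 1 P Q \<le> ereal 1" using upper[OF dph] v0 v1 by simp
      also have "ereal 1 < ereal 3" by simp
      also have "ereal 3 \<le> oscillation \<beta> 0 1 P Q"
        using osc_lower3[of 0 s u 1 P Q \<beta>] su b0 b1 v0 v1 vs vu by simp
      finally show ?thesis using dph by blast
    qed
  qed
  show ?thesis using part1 part2 by blast
qed

end
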